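(* Let $G$ be a graph (the similarity graph) on the vertex set $\{\mathbf{y}_1,\dots,\mathbf{y}_n\}$ of a sequence of observations, identified with the index set $\{1,\dots,n\}$, with edge set also denoted $G$. Work under the permutation null distribution, which places probability $1/n!$ on each of the $n!$ orderings of the observations (the graph $G$ is held fixed; only the time-indices of the observations are permuted); $\mathbf{E}$, $\mathbf{Var}$, $\mathbf{Cov}$ denote moments under this distribution. (Single change-point.) For $1\le t<n$ let $R_1(t)$ be the number of edges of $G$ joining two observations with indices $\le t$, and $R_2(t)$ the number of edges joining two observations with indices $>t$. Let $\Sigma(t)$ be the covariance matrix of $(R_1(t),R_2(t))^T$ under the permutation null (assumed invertible), and $$S(t)=\begin{pmatrix}R_1(t)-\mathbf{E}R_1(t)\\ R_2(t)-\mathbf{E}R_2(t)\end{pmatrix}^T\Sigma(t)^{-1}\begin{pmatrix}R_1(t)-\mathbf{E}R_1(t)\\ R_2(t)-\mathbf{E}R_2(t)\end{pmatrix}.$$ With $p(t)=\frac{t-1}{n-2}$, $q(t)=1-p(t)$, let $R_w(t)=q(t)R_1(t)+p(t)R_2(t)$ and $R_{\mathrm{diff}}(t)=R_1(t)-R_2(t)$, and let $Z_w(t)=\frac{R_w(t)-\mathbf{E}R_w(t)}{\sqrt{\mathbf{Var}R_w(t)}}$, $Z_{\mathrm{diff}}(t)=\frac{R_{\mathrm{diff}}(t)-\mathbf{E}R_{\mathrm{diff}}(t)}{\sqrt{\mathbf{Var}R_{\mathrm{diff}}(t)}}$ (variances assumed positive). Then $$S(t)=Z_w^2(t)+Z_{\mathrm{diff}}^2(t).$$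 (Changed interval.) For $1\le t_1<t_2\le n$ with $m=t_2-t_1$, let $R_1(t_1,t_2)$ be the number of edges of $G$ joining two observations with indices outside $(t_1,t_2]$, and $R_2(t_1,t_2)$ the number of edges joining two observations with indices in $(t_1,t_2]$. Define $S(t_1,t_2)$ as the same quadratic form in $(R_1(t_1,t_2)-\mathbf{E}R_1(t_1,t_2),\,R_2(t_1,t_2)-\mathbf{E}R_2(t_1,t_2))$ with the inverse of their permutation-null covariance matrix; let $R_w(t_1,t_2)=\frac{m-1}{n-2}R_1(t_1,t_2)+\frac{n-m-1}{n-2}R_2(t_1,t_2)$, $R_{\mathrm{diff}}(t_1,t_2)=R_1(t_1,t_2)-R_2(t_1,t_2)$, and $Z_w(t_1,t_2)$, $Z_{\mathrm{diff}}(t_1,t_2)$ their standardizations by permutation-null mean and standard deviation. Then $$S(t_1,t_2)=Z_w^2(t_1,t_2)+Z_{\mathrm{diff}}^2(t_1,t_2).$$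
   Context: The weighted statistic weights each within-group edge count by (size of the other group $-1$)$/(n-2)$; in the single change-point case the group before $t$ has size $t$ and the group after has size $n-t$. *)

theory Defs
  imports "HOL-Analysis.Analysis" "HOL-Combinatorics.Permutations"
begin

text \<open>Under the permutation null, a permutation sigma of
  {1..n} reassigns observation i to time index sigma i; each of the n! permutations
  has probability 1/n!. The observed data correspond to sigma = id.\<close>

definition simple_graph_on :: "nat \<Rightarrow> nat set set \<Rightarrow> bool" where
  "simple_graph_on n G \<longleftrightarrow> (\<forall>e\<in>G. card e = 2 \<and> e \<subseteq> {1..n})"

definition perm_set :: "nat \<Rightarrow> (nat \<Rightarrow> nat) set" where
  "perm_set n = {\<sigma>. \<sigma> permutes {1..n}}"

definition PE :: "nat \<Rightarrow> ((nat \<Rightarrow> nat) \<Rightarrow> real) \<Rightarrow> real" where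
  "PE n X = (\<Sum>\<sigma>\<in>perm_set n. X \<sigma>) / fact n"

definition PCov :: "nat \<Rightarrow> ((nat \<Rightarrow> nat) \<Rightarrow> real) \<Rightarrow> ((nat \<Rightarrow> nat) \<Rightarrow> real) \<Rightarrow> real" where
  "PCov n X Y = PE n (\<lambda>\<sigma>. (X \<sigma> - PE n X) * (Y \<sigma> - PE n Y))"

definition PVar :: "nat \<Rightarrow> ((nat \<Rightarrow> nat) \<Rightarrow> real) \<Rightarrow> real" where
  "PVar n X = PCov n X X"

definition edge_count :: "nat set set \<Rightarrow> nat set \<Rightarrow> (nat \<Rightarrow> nat) \<Rightarrow> real" where
  "edge_count G A \<sigma> = real (card {e\<in>G. \<forall>i\<in>e. \<sigma> i \<in> A})"

definition cov_mat :: "nat \<Rightarrow> ((nat \<Rightarrow> nat) \<Rightarrow> real) \<Rightarrow> ((nat \<Rightarrow> nat) \<Rightarrow> real) \<Rightarrow> real^2^2" where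
  "cov_mat n X Y = (\<chi> i j. PCov n (if i = 1 then X else Y) (if j = 1 then X else Y))"

definition centered_vec :: "nat \<Rightarrow> ((nat \<Rightarrow> nat) \<Rightarrow> real) \<Rightarrow> ((nat \<Rightarrow> nat) \<Rightarrow> real) \<Rightarrow> real^2" where
  "centered_vec n X Y = (\<chi> i. if i = 1 then X id - PE n X else Y id - PE n Y)"

definition quad_stat :: "nat \<Rightarrow> ((nat \<Rightarrow> nat) \<Rightarrow> real) \<Rightarrow> ((nat \<Rightarrow> nat) \<Rightarrow> real) \<Rightarrow> real" where
  "quad_stat n X Y = centered_vec n X Y \<bullet> (matrix_inv (cov_mat n X Y) *v centered_vec n X Y)"

definition std_stat :: "nat \<Rightarrow> ((nat \<Rightarrow> nat) \<Rightarrow> real) \<Rightarrow> real" where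
  "std_stat n X = (X id - PE n X) / sqrt (PVar n X)"

end

theory Submission imports Defs begin

lemma finite_perm_set: "finite (perm_set n)"
  unfolding perm_set_def by (rule finite_permutations) simp

lemma card_perm_set: "card (perm_set n) = fact n"
  unfolding perm_set_def by (rule card_permutations) auto

lemma PE_const: "PE n (\<lambda>\<sigma>. c) = c"
  unfolding PE_def by (simp add: card_perm_set)

lemma PE_add: "PE n (\<lambda>\<sigma>. X \<sigma> + Y \<sigma>) = PE n X + PE n Y"
  unfolding PE_def by (simp add: sum.distrib add_divide_distrib)

lemma PE_diff: "PE n (\<lambda>\<sigma>. X \<sigma> - Y \<sigma>) = PE n X - PE n Y"
  unfolding PE_def by (simp add: sum_subtractf diff_divide_distrib)

lemma PE_cmult: "PE n (\<lambda>\<sigma>. c * X \<sigma>) = c * PE n X"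
  unfolding PE_def by (simp add: sum_distrib_left)

lemma PE_sum: "PE n (\<lambda>\<sigma>. \<Sum>k\<in>K. f k \<sigma>) = (\<Sum>k\<in>K. PE n (f k))"
  unfolding PE_def sum_divide_distrib[symmetric] by (subst sum.swap) (rule refl)

lemma PE_cong: "(\<And>\<sigma>. \<sigma> \<in> perm_set n \<Longrightarrow> X \<sigma> = Y \<sigma>) \<Longrightarrow> PE n X = PE n Y"
  unfolding PE_def by (simp cong: sum.cong)

lemma PCov_alt: "PCov n X Y = PE n (\<lambda>\<sigma>. X \<sigma> * Y \<sigma>) - PE n X * PE n Y"
proof -
  have "PCov n X Y = PE n (\<lambda>\<sigma>. X \<sigma> * Y \<sigma> - PE n Y * X \<sigma> - (PE n X * Y \<sigma> - PE n X * PE n Y))"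
    unfolding PCov_def by (rule PE_cong) (simp add: algebra_simps)
  also have "\<dots> = PE n (\<lambda>\<sigma>. X \<sigma> * Y \<sigma>) - PE n Y * PE n X - (PE n X * PE n Y - PE n X * PE n Y)"
    by (simp only: PE_diff PE_cmult PE_const)
  finally show ?thesis by simp
qed

lemma PCov_comm: "PCov n X Y = PCov n Y X"
  unfolding PCov_alt by (simp add: mult.commute)

lemma PCov_cong: "(\<And>\<sigma>. \<sigma> \<in> perm_set n \<Longrightarrow> X \<sigma> = X' \<sigma>) \<Longrightarrow> (\<And>\<sigma>. \<sigma> \<in> perm_set n \<Longrightarrow> Y \<sigma> = Y' \<sigma>)
  \<Longrightarrow> PCov n X Y = PCov n X' Y'"
proof -
  assume a: "\<And>\<sigma>. \<sigma> \<in> perm_set n \<Longrightarrow> X \<sigma> = X' \<sigma>" and b: "\<And>\<sigma>. \<sigma> \<in> perm_set n \<Longrightarrow> Y \<sigma> = Y' \<sigma>"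
  have "PE n X = PE n X'" by (rule PE_cong) (rule a)
  moreover have "PE n Y = PE n Y'" by (rule PE_cong) (rule b)
  moreover have "PE n (\<lambda>\<sigma>. X \<sigma> * Y \<sigma>) = PE n (\<lambda>\<sigma>. X' \<sigma> * Y' \<sigma>)" by (rule PE_cong) (simp add: a b)
  ultimately show ?thesis unfolding PCov_alt by simp
qed

lemma PCov_add_right: "PCov n X (\<lambda>\<sigma>. Y \<sigma> + Z \<sigma>) = PCov n X Y + PCov n X Z"
  unfolding PCov_alt by (simp add: distrib_left PE_add algebra_simps)

lemma PCov_diff_right: "PCov n X (\<lambda>\<sigma>. Y \<sigma> - Z \<sigma>) = PCov n X Y - PCov n X Z"
  unfolding PCov_alt by (simp add: right_diff_distrib PE_diff algebra_simps)

lemma PCov_cmult_right: "PCov n X (\<lambda>\<sigma>. c * Y \<sigma>) = c * PCov n X Y"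
proof -
  have "PE n (\<lambda>\<sigma>. X \<sigma> * (c * Y \<sigma>)) = c * PE n (\<lambda>\<sigma>. X \<sigma> * Y \<sigma>)"
    by (simp add: PE_cmult[symmetric] algebra_simps)
  then show ?thesis unfolding PCov_alt by (simp add: PE_cmult algebra_simps)
qed

lemma PCov_const_right: "PCov n X (\<lambda>\<sigma>. c) = 0"
  unfolding PCov_alt by (simp add: PE_const PE_cmult[symmetric] mult.commute)

lemma PCov_sum_right: "PCov n X (\<lambda>\<sigma>. \<Sum>k\<in>K. f k \<sigma>) = (\<Sum>k\<in>K. PCov n X (f k))"
  unfolding PCov_alt by (simp add: sum_distrib_left PE_sum sum_subtractf)

lemma PCov_add_left: "PCov n (\<lambda>\<sigma>. Y \<sigma> + Z \<sigma>) X = PCov n Y X + PCov n Z X"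
  unfolding PCov_alt by (simp add: distrib_right PE_add algebra_simps)
lemma PCov_diff_left: "PCov n (\<lambda>\<sigma>. Y \<sigma> - Z \<sigma>) X = PCov n Y X - PCov n Z X"
  unfolding PCov_alt by (simp add: left_diff_distrib PE_diff algebra_simps)
lemma PCov_cmult_left: "PCov n (\<lambda>\<sigma>. c * Y \<sigma>) X = c * PCov n Y X"
proof -
  have "PE n (\<lambda>\<sigma>. (c * Y \<sigma>) * X \<sigma>) = c * PE n (\<lambda>\<sigma>. Y \<sigma> * X \<sigma>)"
    by (simp add: PE_cmult[symmetric] algebra_simps)
  then show ?thesis unfolding PCov_alt by (simp add: PE_cmult algebra_simps)
qed
lemma PCov_const_left: "PCov n (\<lambda>\<sigma>. c) X = 0"
  unfolding PCov_alt by (simp add: PE_const PE_cmult)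
lemma PCov_sum_left: "PCov n (\<lambda>\<sigma>. \<Sum>k\<in>K. f k \<sigma>) X = (\<Sum>k\<in>K. PCov n (f k) X)"
  unfolding PCov_alt by (simp add: sum_distrib_right PE_sum sum_subtractf)


lemma sum_swap_perm:
  assumes "k \<in> {1..n}" "k' \<in> {1..n}"
  shows "(\<Sum>\<sigma>\<in>perm_set n. F (\<sigma> \<circ> Transposition.transpose k k')) = (\<Sum>\<sigma>\<in>perm_set n. F \<sigma>)"
  unfolding perm_set_def
  using sum_permutations_compose_right[OF permutes_swap_id[OF assms], of F] by simp

lemma PE_swap:
  assumes "k \<in> {1..n}" "k' \<in> {1..n}"
  shows "PE n (\<lambda>\<sigma>. F (\<sigma> \<circ> Transposition.transpose k k')) = PE n F"
  unfolding PE_def using sum_swap_perm[OF assms] by simp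


definition xi :: "nat set \<Rightarrow> nat \<Rightarrow> (nat \<Rightarrow> nat) \<Rightarrow> real" where
  "xi A i \<sigma> = (if \<sigma> i \<in> A then 1 else 0)"

lemma perm_setD: "\<sigma> \<in> perm_set n \<Longrightarrow> \<sigma> permutes {1..n}"
  unfolding perm_set_def by simp

lemma sum_xi:
  assumes "\<sigma> \<in> perm_set n" "A \<subseteq> {1..n}"
  shows "(\<Sum>i\<in>{1..n}. xi A i \<sigma>) = real (card A)"
proof -
  have p: "\<sigma> permutes {1..n}" using assms(1) perm_setD by blast
  have "(\<Sum>i\<in>{1..n}. xi A i \<sigma>) = real (card {i\<in>{1..n}. \<sigma> i \<in> A})"
    unfolding xi_def by (simp add: sum.If_cases Int_def conj_commute)
  also have "card {i\<in>{1..n}. \<sigma> i \<in> A} = card (\<sigma> ` {i\<in>{1..n}. \<sigma> i \<in> A})"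
    by (rule card_image[symmetric]) (meson p inj_on_subset permutes_inj subset_UNIV)
  also have "\<sigma> ` {i\<in>{1..n}. \<sigma> i \<in> A} = A"
  proof
    show "\<sigma> ` {i \<in> {1..n}. \<sigma> i \<in> A} \<subseteq> A" by auto
    show "A \<subseteq> \<sigma> ` {i \<in> {1..n}. \<sigma> i \<in> A}"
    proof
      fix y assume "y \<in> A"
      then have "y \<in> \<sigma> ` {1..n}" using permutes_image[OF p] assms(2) by auto
      then show "y \<in> \<sigma> ` {i \<in> {1..n}. \<sigma> i \<in> A}" using \<open>y \<in> A\<close> by auto
    qed
  qed
  finally show ?thesis .
qed

lemma xi_sq: "xi A u \<sigma> * xi A u \<sigma> = xi A u \<sigma>"
  unfolding xi_def by simp

lemma E1_sym:
  assumes "k \<in> {1..n}" "k' \<in> {1..n}"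
  shows "PE n (xi A k) = PE n (xi A k')"
proof -
  have "PE n (\<lambda>\<sigma>. xi A k' (\<sigma> \<circ> Transposition.transpose k k')) = PE n (xi A k')"
    by (rule PE_swap[OF assms])
  moreover have "(\<lambda>\<sigma>. xi A k' (\<sigma> \<circ> Transposition.transpose k k')) = xi A k"
    by (auto simp: xi_def)
  ultimately show ?thesis by simp
qed

lemma E1:
  assumes "i \<in> {1..n}" "A \<subseteq> {1..n}"
  shows "PE n (xi A i) = real (card A) / real n"
proof -
  have n: "n \<ge> 1" using assms by auto
  have "(\<Sum>k\<in>{1..n}. PE n (xi A k)) = PE n (\<lambda>\<sigma>. \<Sum>k\<in>{1..n}. xi A k \<sigma>)"
    by (simp add: PE_sum)
  also have "\<dots> = PE n (\<lambda>\<sigma>. real (card A))"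
    by (rule PE_cong) (rule sum_xi, use assms in auto)
  also have "\<dots> = real (card A)" by (rule PE_const)
  finally have "(\<Sum>k\<in>{1..n}. PE n (xi A k)) = real (card A)" .
  moreover have "(\<Sum>k\<in>{1..n}. PE n (xi A k)) = real n * PE n (xi A i)"
    using E1_sym[OF _ assms(1)] by simp
  ultimately show ?thesis using n by (simp add: field_simps)
qed

lemma E2_sym:
  assumes "u \<in> {1..n}" "v \<in> {1..n}" "k \<in> {1..n}" "u \<noteq> v" "u \<noteq> k"
  shows "PE n (\<lambda>\<sigma>. xi A u \<sigma> * xi A k \<sigma>) = PE n (\<lambda>\<sigma>. xi A u \<sigma> * xi A v \<sigma>)"
proof -
  have "PE n (\<lambda>\<sigma>. (\<lambda>\<sigma>. xi A u \<sigma> * xi A v \<sigma>) (\<sigma> \<circ> Transposition.transpose k v)) = PE n (\<lambda>\<sigma>. xi A u \<sigma> * xi A v \<sigma>)"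
    by (rule PE_swap[OF assms(3,2)])
  moreover have "(\<lambda>\<sigma>. (\<lambda>\<sigma>. xi A u \<sigma> * xi A v \<sigma>) (\<sigma> \<circ> Transposition.transpose k v)) = (\<lambda>\<sigma>. xi A u \<sigma> * xi A k \<sigma>)"
    using assms by (simp add: xi_def o_def)
  ultimately show ?thesis by simp
qed

lemma E2:
  assumes "u \<in> {1..n}" "v \<in> {1..n}" "u \<noteq> v" "A \<subseteq> {1..n}"
  shows "PE n (\<lambda>\<sigma>. xi A u \<sigma> * xi A v \<sigma>) = real (card A) * (real (card A) - 1) / (real n * (real n - 1))"
proof -
  have n: "n \<ge> 2" using assms by auto
  let ?E = "PE n (\<lambda>\<sigma>. xi A u \<sigma> * xi A v \<sigma>)"
  have "(\<Sum>k\<in>{1..n}. PE n (\<lambda>\<sigma>. xi A u \<sigma> * xi A k \<sigma>)) = PE n (\<lambda>\<sigma>. xi A u \<sigma> * (\<Sum>k\<in>{1..n}. xi A k \<sigma>))"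
    by (simp add: PE_sum sum_distrib_left)
  also have "\<dots> = PE n (\<lambda>\<sigma>. real (card A) * xi A u \<sigma>)"
    by (rule PE_cong) (subst sum_xi, use assms in auto)
  also have "\<dots> = real (card A) * (real (card A) / real n)"
    using E1[OF assms(1,4)] by (simp add: PE_cmult)
  finally have s: "(\<Sum>k\<in>{1..n}. PE n (\<lambda>\<sigma>. xi A u \<sigma> * xi A k \<sigma>)) = real (card A) * (real (card A) / real n)" .
  have "(\<Sum>k\<in>{1..n}. PE n (\<lambda>\<sigma>. xi A u \<sigma> * xi A k \<sigma>)) =
     PE n (\<lambda>\<sigma>. xi A u \<sigma> * xi A u \<sigma>) + (\<Sum>k\<in>{1..n}-{u}. PE n (\<lambda>\<sigma>. xi A u \<sigma> * xi A k \<sigma>))"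
    by (rule sum.remove) (use assms in auto)
  also have "(\<Sum>k\<in>{1..n}-{u}. PE n (\<lambda>\<sigma>. xi A u \<sigma> * xi A k \<sigma>)) = (\<Sum>k\<in>{1..n}-{u}. ?E)"
  proof (rule sum.cong)
    fix k assume "k \<in> {1..n} - {u}"
    then show "PE n (\<lambda>\<sigma>. xi A u \<sigma> * xi A k \<sigma>) = ?E" by (intro E2_sym) (use assms in auto)
  qed simp
  also have "\<dots> = real (card ({1..n} - {u})) * ?E" by simp
  also have "card ({1..n} - {u}) = n - 1" using assms(1) by simp
  also have "real (n - 1) = real n - 1" using n by simp
  also have "PE n (\<lambda>\<sigma>. xi A u \<sigma> * xi A u \<sigma>) = real (card A) / real n"
    using E1[OF assms(1,4)] by (simp add: xi_sq)
  finally have "real (card A) / real n + (real n - 1) * ?E = real (card A) * (real (card A) / real n)"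
    using s by simp
  then have h: "(real n - 1) * ?E = real (card A) * (real (card A) / real n) - real (card A) / real n" by linarith
  have h2: "real (card A) * (real (card A) / real n) - real (card A) / real n = real (card A) * (real (card A) - 1) / real n"
    by (simp add: algebra_simps diff_divide_distrib)
  have nz: "real n - 1 \<noteq> 0" using n by simp
  have hh: "(real n - 1) * ?E = real (card A) * (real (card A) - 1) / real n" using h h2 by simp
  have "?E = ((real n - 1) * ?E) / (real n - 1)" using nz by simp
  also have "\<dots> = real (card A) * (real (card A) - 1) / real n / (real n - 1)" unfolding hh ..
  finally show ?thesis by (simp add: divide_divide_eq_left)
qed


lemma alg_beta:
  fixes x a :: real
  assumes "x \<ge> 3"
  shows "(1 - (a - 1) / (x - 2)) * (a * (a - 1) / (x * (x - 1))) - (a - 1) / (x - 2) * (a / x)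
     - (a * (a - 1) / (x * (x - 1)) - 2 * ((a - 1) / (x - 2)) * (a / x)) * (a / x) = 0"
proof -
  have h: "x \<noteq> 0" "x - 1 \<noteq> 0" "x - 2 \<noteq> 0" using assms by auto
  define D where "D = x * (x - 1) * (x - 2)"
  have e: "(1 - (a - 1) / (x - 2)) = (x - 1 - a) / (x - 2)" using h by (simp add: field_simps)
  have t1: "(1 - (a - 1) / (x - 2)) * (a * (a - 1) / (x * (x - 1))) = a * (a - 1) * (x - 1 - a) / D"
    unfolding e D_def by (simp add: ac_simps)
  have t2: "(a - 1) / (x - 2) * (a / x) = a * (a - 1) * (x - 1) / D"
    unfolding D_def using h by (simp add: ac_simps)
  have i1: "a * (a - 1) / (x * (x - 1)) = a * (a - 1) * (x - 2) / D" unfolding D_def using h by simp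
  have i2: "2 * ((a - 1) / (x - 2)) * (a / x) = a * (a - 1) * (2 * (x - 1)) / D"
  proof -
    have "a * (a - 1) * (2 * (x - 1)) / (x * (x - 1) * (x - 2)) = (2*a*(a-1)) * (x-1) / ((x*(x-2)) * (x-1))"
      by (simp only: mult_ac)
    also have "\<dots> = 2*a*(a-1)/(x*(x-2))" by (rule nonzero_mult_divide_mult_cancel_right[OF h(2)])
    finally show ?thesis unfolding D_def
      by (simp only: times_divide_eq_left times_divide_eq_right divide_divide_eq_left mult_ac)
  qed
  have "a * (a - 1) * (x - 2) - a * (a - 1) * (2 * (x - 1)) = (- a * (a - 1)) * x" by algebra
  then have t3': "a * (a - 1) / (x * (x - 1)) - 2 * ((a - 1) / (x - 2)) * (a / x) = (- a * (a - 1)) * x / D"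
    unfolding i1 i2 by (simp only: diff_divide_distrib[symmetric])
  have t3: "(a * (a - 1) / (x * (x - 1)) - 2 * ((a - 1) / (x - 2)) * (a / x)) * (a / x) = (- a * (a - 1)) * a / D"
    unfolding t3' using h(1) by simp
  have "a * (a - 1) * (x - 1 - a) - a * (a - 1) * (x - 1) - (- a * (a - 1)) * a = 0" by algebra
  then show ?thesis unfolding t1 t2 t3 by (simp only: diff_divide_distrib[symmetric] div_0)
qed

definition gg :: "nat set \<Rightarrow> real \<Rightarrow> nat \<Rightarrow> nat \<Rightarrow> (nat \<Rightarrow> nat) \<Rightarrow> real" where
  "gg A p u v \<sigma> = xi A u \<sigma> * xi A v \<sigma> - p * (xi A u \<sigma> + xi A v \<sigma>)"

lemma gg_comm: "gg A p u v = gg A p v u"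
  unfolding gg_def by (auto simp: algebra_simps)

lemma beta0:
  assumes "u \<in> {1..n}" "v \<in> {1..n}" "u \<noteq> v" "A \<subseteq> {1..n}" "n \<ge> 3"
    and p: "p = (real (card A) - 1) / (real n - 2)"
  shows "PCov n (gg A p u v) (xi A u) = 0"
proof -
  have e1u: "PE n (xi A u) = real (card A) / real n" by (rule E1[OF assms(1,4)])
  have e1v: "PE n (xi A v) = real (card A) / real n" by (rule E1[OF assms(2,4)])
  have e2: "PE n (\<lambda>\<sigma>. xi A u \<sigma> * xi A v \<sigma>) = real (card A) * (real (card A) - 1) / (real n * (real n - 1))"
    by (rule E2[OF assms(1-4)])
  have "PE n (\<lambda>\<sigma>. gg A p u v \<sigma> * xi A u \<sigma>) = PE n (\<lambda>\<sigma>. (1 - p) * (xi A u \<sigma> * xi A v \<sigma>) - p * xi A u \<sigma>)"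
    by (rule PE_cong) (simp add: gg_def xi_def)
  also have "\<dots> = (1 - p) * PE n (\<lambda>\<sigma>. xi A u \<sigma> * xi A v \<sigma>) - p * PE n (xi A u)"
    by (simp add: PE_diff PE_cmult)
  finally have a1: "PE n (\<lambda>\<sigma>. gg A p u v \<sigma> * xi A u \<sigma>) = \<dots>" .
  have a2: "PE n (gg A p u v) = PE n (\<lambda>\<sigma>. xi A u \<sigma> * xi A v \<sigma>) - p * (PE n (xi A u) + PE n (xi A v))"
    unfolding gg_def by (simp add: PE_diff PE_cmult PE_add)
  have "real n \<ge> 3" using assms by simp
  from alg_beta[OF this, of "real (card A)"]
  show ?thesis unfolding PCov_alt a1 a2 e1u e1v e2 by (simp add: p)
qed

lemma gamma_sym:
  assumes "u \<in> {1..n}" "v \<in> {1..n}" "k \<in> {1..n}" "k' \<in> {1..n}"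
    "k \<notin> {u,v}" "k' \<notin> {u,v}"
  shows "PCov n (gg A p u v) (xi A k) = PCov n (gg A p u v) (xi A k')"
proof -
  have "PE n (\<lambda>\<sigma>. (\<lambda>\<sigma>. gg A p u v \<sigma> * xi A k' \<sigma>) (\<sigma> \<circ> Transposition.transpose k k')) = PE n (\<lambda>\<sigma>. gg A p u v \<sigma> * xi A k' \<sigma>)"
    by (rule PE_swap[OF assms(3,4)])
  moreover have "(\<lambda>\<sigma>. (\<lambda>\<sigma>. gg A p u v \<sigma> * xi A k' \<sigma>) (\<sigma> \<circ> Transposition.transpose k k')) = (\<lambda>\<sigma>. gg A p u v \<sigma> * xi A k \<sigma>)"
    using assms by (simp add: gg_def xi_def o_def)
  ultimately show ?thesis unfolding PCov_alt using E1_sym[OF assms(3,4)] by simp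
qed

lemma beta0v:
  assumes "u \<in> {1..n}" "v \<in> {1..n}" "u \<noteq> v" "A \<subseteq> {1..n}" "n \<ge> 3"
    and p: "p = (real (card A) - 1) / (real n - 2)"
  shows "PCov n (gg A p u v) (xi A v) = 0"
proof -
  have "v \<noteq> u" using assms(3) by simp
  have "PCov n (gg A p v u) (xi A v) = 0" by (rule beta0[OF assms(2,1) \<open>v \<noteq> u\<close> assms(4,5) p])
  moreover have "gg A p u v = gg A p v u" by (rule gg_comm)
  ultimately show ?thesis by simp
qed

lemma key0:
  assumes "u \<in> {1..n}" "v \<in> {1..n}" "u \<noteq> v" "A \<subseteq> {1..n}" "n \<ge> 3" "k \<in> {1..n}"
    and p: "p = (real (card A) - 1) / (real n - 2)"
  shows "PCov n (gg A p u v) (xi A k) = 0"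
proof (cases "k = u \<or> k = v")
  case True
  then show ?thesis
  proof
    assume "k = u" then show ?thesis using beta0[OF assms(1-5) p] by simp
  next
    assume "k = v" then show ?thesis using beta0v[OF assms(1-5) p] by simp
  qed
next
  case False
  let ?g = "gg A p u v"
  have "(\<Sum>j\<in>{1..n}. PCov n ?g (xi A j)) = PCov n ?g (\<lambda>\<sigma>. \<Sum>j\<in>{1..n}. xi A j \<sigma>)"
    by (simp only: PCov_sum_right)
  also have "\<dots> = PCov n ?g (\<lambda>\<sigma>. real (card A))"
    by (rule PCov_cong) (rule refl, rule sum_xi, use assms in auto)
  also have "\<dots> = 0" by (rule PCov_const_right)
  finally have s: "(\<Sum>j\<in>{1..n}. PCov n ?g (xi A j)) = 0" .
  have "(\<Sum>j\<in>{1..n}. PCov n ?g (xi A j)) = PCov n ?g (xi A u) + (\<Sum>j\<in>{1..n}-{u}. PCov n ?g (xi A j))"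
    by (rule sum.remove) (use assms in auto)
  also have "(\<Sum>j\<in>{1..n}-{u}. PCov n ?g (xi A j)) = PCov n ?g (xi A v) + (\<Sum>j\<in>{1..n}-{u}-{v}. PCov n ?g (xi A j))"
    by (rule sum.remove) (use assms in auto)
  also have "(\<Sum>j\<in>{1..n}-{u}-{v}. PCov n ?g (xi A j)) = (\<Sum>j\<in>{1..n}-{u}-{v}. PCov n ?g (xi A k))"
  proof (rule sum.cong)
    fix j assume j: "j \<in> {1..n}-{u}-{v}"
    show "PCov n ?g (xi A j) = PCov n ?g (xi A k)"
      by (rule gamma_sym) (use assms False j in auto)
  qed simp
  also have "\<dots> = real (card ({1..n}-{u}-{v})) * PCov n ?g (xi A k)" by simp
  also have "card ({1..n}-{u}-{v}) = n - 2"
  proof -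
    have "card ({1..n}-{u}) = n - 1" using assms(1) by simp
    moreover have "v \<in> {1..n}-{u}" using assms(2,3) by auto
    ultimately show ?thesis by simp
  qed
  finally have "PCov n ?g (xi A u) + (PCov n ?g (xi A v) + real (n - 2) * PCov n ?g (xi A k)) = 0"
    using s by simp
  moreover have "PCov n ?g (xi A u) = 0" by (rule beta0[OF assms(1-5) p])
  moreover have "PCov n ?g (xi A v) = 0" by (rule beta0v[OF assms(1-5) p])
  moreover have "real (n - 2) \<noteq> 0" using assms by simp
  ultimately show ?thesis by simp
qed

definition IA :: "nat set \<Rightarrow> nat set \<Rightarrow> (nat \<Rightarrow> nat) \<Rightarrow> real" where
  "IA A e \<sigma> = (if \<forall>i\<in>e. \<sigma> i \<in> A then 1 else 0)"

lemma card_filter_sum: "finite S \<Longrightarrow> real (card {x\<in>S. P x}) = (\<Sum>x\<in>S. if P x then 1 else 0)"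
proof (induction S rule: finite_induct)
  case empty then show ?case by simp
next
  case (insert y S)
  have "{x \<in> insert y S. P x} = (if P y then insert y {x\<in>S. P x} else {x\<in>S. P x})" by auto
  then show ?case using insert by auto
qed

lemma edge_count_sum:
  assumes "simple_graph_on n G"
  shows "edge_count G A \<sigma> = (\<Sum>e\<in>G. IA A e \<sigma>)"
proof -
  have "G \<subseteq> Pow {1..n}" using assms unfolding simple_graph_on_def by auto
  then have "finite G" by (meson finite_Pow_iff finite_atLeastAtMost finite_subset)
  then show ?thesis unfolding edge_count_def IA_def by (rule card_filter_sum)
qed

lemma edge_uv:
  assumes "simple_graph_on n G" "e \<in> G"
  obtains u v where "e = {u, v}" "u \<noteq> v" "u \<in> {1..n}" "v \<in> {1..n}"
proof -
  have "card e = 2" "e \<subseteq> {1..n}" using assms unfolding simple_graph_on_def by auto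
  then obtain u v where "e = {u, v}" "u \<noteq> v" by (meson card_2_iff)
  then show ?thesis using that \<open>e \<subseteq> {1..n}\<close> by auto
qed

lemma IA_A: "IA A {u, v} \<sigma> = xi A u \<sigma> * xi A v \<sigma>"
  unfolding IA_def xi_def by auto

lemma IA_B:
  assumes "\<sigma> \<in> perm_set n" "u \<in> {1..n}" "v \<in> {1..n}"
  shows "IA ({1..n} - A) {u, v} \<sigma> = (1 - xi A u \<sigma>) * (1 - xi A v \<sigma>)"
proof -
  have p: "\<sigma> permutes {1..n}" using assms(1) perm_setD by blast
  have "\<sigma> u \<in> {1..n}" "\<sigma> v \<in> {1..n}" using permutes_in_image[OF p] assms(2,3) by auto
  then show ?thesis unfolding IA_def xi_def by auto
qed

lemma term0:
  assumes G: "simple_graph_on n G" and "e \<in> G" "f \<in> G" "A \<subseteq> {1..n}" "n \<ge> 3"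
    and p: "p = (real (card A) - 1) / (real n - 2)"
  shows "PCov n (\<lambda>\<sigma>. (1 - p) * IA A e \<sigma> + p * IA ({1..n} - A) e \<sigma>)
                 (\<lambda>\<sigma>. IA A f \<sigma> - IA ({1..n} - A) f \<sigma>) = 0"
proof -
  obtain u v where e: "e = {u, v}" "u \<noteq> v" "u \<in> {1..n}" "v \<in> {1..n}" using edge_uv[OF G assms(2)] by blast
  obtain k l where f: "f = {k, l}" "k \<in> {1..n}" "l \<in> {1..n}" using edge_uv[OF G assms(3)] by blast
  have "PCov n (\<lambda>\<sigma>. (1 - p) * IA A e \<sigma> + p * IA ({1..n} - A) e \<sigma>)
                 (\<lambda>\<sigma>. IA A f \<sigma> - IA ({1..n} - A) f \<sigma>)
      = PCov n (\<lambda>\<sigma>. gg A p u v \<sigma> + p) (\<lambda>\<sigma>. (xi A k \<sigma> + xi A l \<sigma>) - 1)"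
  proof (rule PCov_cong)
    fix \<sigma> assume s: "\<sigma> \<in> perm_set n"
    show "(1 - p) * IA A e \<sigma> + p * IA ({1..n} - A) e \<sigma> = gg A p u v \<sigma> + p"
      unfolding e(1) IA_A[of A] IA_B[OF s e(3,4)] gg_def by (simp add: algebra_simps)
    show "IA A f \<sigma> - IA ({1..n} - A) f \<sigma> = (xi A k \<sigma> + xi A l \<sigma>) - 1"
      unfolding f(1) IA_A[of A] IA_B[OF s f(2,3)] by (simp add: algebra_simps xi_def)
  qed
  also have "\<dots> = PCov n (gg A p u v) (xi A k) + PCov n (gg A p u v) (xi A l)"
    by (simp add: PCov_add_left PCov_diff_right PCov_add_right PCov_const_left PCov_const_right)
  also have "\<dots> = 0" using key0[OF e(3,4,2) assms(4,5) _ p] f by simp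
  finally show ?thesis .
qed

lemma main_cov:
  assumes G: "simple_graph_on n G" and "A \<subseteq> {1..n}" "n \<ge> 3"
    and p: "p = (real (card A) - 1) / (real n - 2)"
  shows "PCov n (\<lambda>\<sigma>. (1 - p) * edge_count G A \<sigma> + p * edge_count G ({1..n} - A) \<sigma>)
                (\<lambda>\<sigma>. edge_count G A \<sigma> - edge_count G ({1..n} - A) \<sigma>) = 0"
proof -
  have "PCov n (\<lambda>\<sigma>. (1 - p) * edge_count G A \<sigma> + p * edge_count G ({1..n} - A) \<sigma>)
                (\<lambda>\<sigma>. edge_count G A \<sigma> - edge_count G ({1..n} - A) \<sigma>)
     = PCov n (\<lambda>\<sigma>. \<Sum>e\<in>G. (1 - p) * IA A e \<sigma> + p * IA ({1..n} - A) e \<sigma>)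
              (\<lambda>\<sigma>. \<Sum>f\<in>G. IA A f \<sigma> - IA ({1..n} - A) f \<sigma>)"
    by (simp add: edge_count_sum[OF G] sum.distrib sum_distrib_left sum_subtractf)
  also have "\<dots> = (\<Sum>e\<in>G. \<Sum>f\<in>G. PCov n (\<lambda>\<sigma>. (1 - p) * IA A e \<sigma> + p * IA ({1..n} - A) e \<sigma>)
                 (\<lambda>\<sigma>. IA A f \<sigma> - IA ({1..n} - A) f \<sigma>))"
    by (simp add: PCov_sum_left PCov_sum_right)
  also have "\<dots> = 0" using term0[OF G _ _ assms(2,3) p] by simp
  finally show ?thesis .
qed


lemma alg_final:
  fixes w1 w2 a b d sw sd c1 c2 y1 y2 :: real
  assumes w: "w1 + w2 = 1" and cr: "w1*a - w1*b + w2*b - w2*d = 0"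
    and sw: "sw = w1^2*a + 2*w1*w2*b + w2^2*d" and sd: "sd = a - 2*b + d"
    and pw: "sw > 0" and pd: "sd > 0" and c1: "c1 = a*y1 + b*y2" and c2: "c2 = b*y1 + d*y2"
  shows "c1*y1 + c2*y2 = (w1*c1 + w2*c2)^2/sw + (c1 - c2)^2/sd"
proof -
  have w1: "w1 = 1 - w2" using w by simp
  have "a - b - w2 * sd = w1*a - w1*b + w2*b - w2*d" unfolding sd w1 by (simp add: algebra_simps)
  then have ha: "a = b + w2 * sd" using cr by simp
  have "d = sd - a + 2*b" using sd by simp
  also have "\<dots> = b + (1 - w2) * sd" unfolding ha by (simp add: algebra_simps)
  finally have hd: "d = b + w1 * sd" using w1 by simp
  define K where "K = b + w1 * w2 * sd"
  have swK: "sw = K" unfolding sw K_def ha hd w1 by (simp add: algebra_simps power2_eq_square)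
  have m1: "w1*c1 + w2*c2 = K * (y1 + y2)" unfolding c1 c2 K_def ha hd w1 by (simp add: algebra_simps)
  have m2: "c1 - c2 = sd * (w2*y1 - w1*y2)" unfolding c1 c2 ha hd w1 by (simp add: algebra_simps)
  have K0: "K \<noteq> 0" using pw swK by simp
  have d0: "sd \<noteq> 0" using pd by simp
  have r1: "(w1*c1 + w2*c2)^2/sw = K * (y1 + y2)^2"
    unfolding m1 swK using K0 by (simp add: power2_eq_square)
  have r2: "(c1 - c2)^2/sd = sd * (w2*y1 - w1*y2)^2"
    unfolding m2 using d0 by (simp add: power2_eq_square)
  show ?thesis unfolding r1 r2 unfolding c1 c2 K_def ha hd w1 by (simp add: algebra_simps power2_eq_square)
qed

lemma PCov_lin:
  "PCov n (\<lambda>\<sigma>. x1 * X \<sigma> + x2 * Y \<sigma>) (\<lambda>\<sigma>. y1 * X \<sigma> + y2 * Y \<sigma>)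
   = x1*y1*PCov n X X + x1*y2*PCov n X Y + x2*y1*PCov n Y X + x2*y2*PCov n Y Y"
  by (simp add: PCov_add_left PCov_add_right PCov_cmult_left PCov_cmult_right algebra_simps)

lemma quad_generic:
  fixes R1 R2 :: "(nat \<Rightarrow> nat) \<Rightarrow> real"
  assumes w: "w1 + w2 = 1"
    and cr: "PCov n (\<lambda>\<sigma>. w1 * R1 \<sigma> + w2 * R2 \<sigma>) (\<lambda>\<sigma>. R1 \<sigma> - R2 \<sigma>) = 0"
    and inv: "invertible (cov_mat n R1 R2)"
    and pw: "PVar n (\<lambda>\<sigma>. w1 * R1 \<sigma> + w2 * R2 \<sigma>) > 0"
    and pd: "PVar n (\<lambda>\<sigma>. R1 \<sigma> - R2 \<sigma>) > 0"
  shows "quad_stat n R1 R2 = (std_stat n (\<lambda>\<sigma>. w1 * R1 \<sigma> + w2 * R2 \<sigma>))\<^sup>2 + (std_stat n (\<lambda>\<sigma>. R1 \<sigma> - R2 \<sigma>))\<^sup>2"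
proof -
  define M where "M = cov_mat n R1 R2"
  define c where "c = centered_vec n R1 R2"
  define v where "v = matrix_inv M *v c"
  have "\<exists>A'. M ** A' = mat 1 \<and> A' ** M = mat 1" using inv unfolding M_def invertible_def by blast
  then have MI: "M ** matrix_inv M = mat 1" unfolding matrix_inv_def by (rule someI2_ex) blast
  have Mv: "M *v v = c" unfolding v_def by (metis MI matrix_vector_mul_assoc matrix_vector_mul_lid)
  define a where "a = PCov n R1 R1"
  define b where "b = PCov n R1 R2"
  define d where "d = PCov n R2 R2"
  have b': "PCov n R2 R1 = b" unfolding b_def by (rule PCov_comm)
  have M11: "M $ 1 $ 1 = a" and M12: "M $ 1 $ 2 = b" and M21: "M $ 2 $ 1 = b" and M22: "M $ 2 $ 2 = d"
    unfolding M_def cov_mat_def a_def b_def d_def using b' b_def by auto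
  define c1 where "c1 = R1 id - PE n R1"
  define c2 where "c2 = R2 id - PE n R2"
  have cc1: "c $ 1 = c1" and cc2: "c $ 2 = c2" unfolding c_def centered_vec_def c1_def c2_def by auto
  have e1: "c1 = a * v$1 + b * v$2"
    using arg_cong[OF Mv, of "\<lambda>x. x $ 1"] by (simp add: matrix_vector_mult_def sum_2 M11 M12 cc1)
  have e2: "c2 = b * v$1 + d * v$2"
    using arg_cong[OF Mv, of "\<lambda>x. x $ 2"] by (simp add: matrix_vector_mult_def sum_2 M21 M22 cc2)
  have q: "quad_stat n R1 R2 = c1 * v$1 + c2 * v$2"
    unfolding quad_stat_def c_def[symmetric] M_def[symmetric] v_def[symmetric]
    by (simp add: inner_vec_def sum_2 cc1 cc2)
  define vw where "vw = PVar n (\<lambda>\<sigma>. w1 * R1 \<sigma> + w2 * R2 \<sigma>)"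
  define vd where "vd = PVar n (\<lambda>\<sigma>. R1 \<sigma> - R2 \<sigma>)"
  have vwe: "vw = w1^2*a + 2*w1*w2*b + w2^2*d"
    unfolding vw_def PVar_def PCov_lin a_def d_def b' by (simp add: b_def power2_eq_square algebra_simps)
  have Rd_eq: "(\<lambda>\<sigma>. R1 \<sigma> - R2 \<sigma>) = (\<lambda>\<sigma>. 1 * R1 \<sigma> + (-1) * R2 \<sigma>)" by auto
  have "vd = PCov n (\<lambda>\<sigma>. 1 * R1 \<sigma> + (-1) * R2 \<sigma>) (\<lambda>\<sigma>. 1 * R1 \<sigma> + (-1) * R2 \<sigma>)"
    by (simp only: vd_def PVar_def Rd_eq)
  also have "\<dots> = a - 2*b + d" unfolding PCov_lin a_def d_def b' by (simp add: b_def)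
  finally have vde: "vd = a - 2*b + d" .
  have "PCov n (\<lambda>\<sigma>. w1 * R1 \<sigma> + w2 * R2 \<sigma>) (\<lambda>\<sigma>. R1 \<sigma> - R2 \<sigma>)
      = PCov n (\<lambda>\<sigma>. w1 * R1 \<sigma> + w2 * R2 \<sigma>) (\<lambda>\<sigma>. 1 * R1 \<sigma> + (-1) * R2 \<sigma>)"
    by (simp only: Rd_eq)
  also have "\<dots> = w1*a - w1*b + w2*b - w2*d" unfolding PCov_lin a_def d_def b' by (simp add: b_def)
  finally have cre: "w1*a - w1*b + w2*b - w2*d = 0" using cr by simp
  have h1: "w1 * R1 id + w2 * R2 id - PE n (\<lambda>\<sigma>. w1 * R1 \<sigma> + w2 * R2 \<sigma>) = w1*c1 + w2*c2"
    by (simp add: PE_add PE_cmult c1_def c2_def algebra_simps)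
  have s1: "(std_stat n (\<lambda>\<sigma>. w1 * R1 \<sigma> + w2 * R2 \<sigma>))\<^sup>2 = (w1*c1 + w2*c2)^2/vw"
    unfolding std_stat_def power_divide h1 vw_def using pw by simp
  have h2: "R1 id - R2 id - PE n (\<lambda>\<sigma>. R1 \<sigma> - R2 \<sigma>) = c1 - c2"
    by (simp add: PE_diff c1_def c2_def)
  have s2: "(std_stat n (\<lambda>\<sigma>. R1 \<sigma> - R2 \<sigma>))\<^sup>2 = (c1 - c2)^2/vd"
    unfolding std_stat_def power_divide h2 vd_def using pd by simp
  show ?thesis unfolding q s1 s2
    by (rule alg_final[OF w cre vwe vde _ _ e1 e2]) (use pw pd vw_def vd_def in auto)
qed


lemma edge_count_small:
  assumes G: "simple_graph_on n G" and s: "\<sigma> \<in> perm_set n" and A: "card A \<le> 1" and fin: "finite A"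
  shows "edge_count G A \<sigma> = 0"
proof -
  have emp: "{e\<in>G. \<forall>i\<in>e. \<sigma> i \<in> A} = {}"
  proof (rule ccontr)
    assume "{e\<in>G. \<forall>i\<in>e. \<sigma> i \<in> A} \<noteq> {}"
    then obtain e where e: "e \<in> G" "\<forall>i\<in>e. \<sigma> i \<in> A" by blast
    obtain u v where uv: "e = {u, v}" "u \<noteq> v" "u \<in> {1..n}" "v \<in> {1..n}" using edge_uv[OF G e(1)] by blast
    have p: "\<sigma> permutes {1..n}" using s perm_setD by blast
    have "\<sigma> u \<noteq> \<sigma> v" using uv(2) permutes_inj[OF p] by (meson injD)
    moreover have "\<sigma> u \<in> A" "\<sigma> v \<in> A" using e(2) uv(1) by auto
    ultimately have "card {\<sigma> u, \<sigma> v} \<le> card A" by (intro card_mono[OF fin]) auto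
    then show False using \<open>\<sigma> u \<noteq> \<sigma> v\<close> A by simp
  qed
  show ?thesis unfolding edge_count_def emp by simp
qed

lemma single_case:
  assumes G: "simple_graph_on n G" and t: "1 \<le> t" "t < n"
    and inv: "invertible (cov_mat n (edge_count G {1..t}) (edge_count G {t<..n}))"
    and pw: "PVar n (\<lambda>\<sigma>. (1 - (real t - 1) / (real n - 2)) * edge_count G {1..t} \<sigma>
                        + (real t - 1) / (real n - 2) * edge_count G {t<..n} \<sigma>) > 0"
    and pd: "PVar n (\<lambda>\<sigma>. edge_count G {1..t} \<sigma> - edge_count G {t<..n} \<sigma>) > 0"
  shows "quad_stat n (edge_count G {1..t}) (edge_count G {t<..n}) =
     (std_stat n (\<lambda>\<sigma>. (1 - (real t - 1) / (real n - 2)) * edge_count G {1..t} \<sigma>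
                        + (real t - 1) / (real n - 2) * edge_count G {t<..n} \<sigma>))\<^sup>2 +
     (std_stat n (\<lambda>\<sigma>. edge_count G {1..t} \<sigma> - edge_count G {t<..n} \<sigma>))\<^sup>2"
proof (cases "n \<ge> 3")
  case True
  have B: "{1..n} - {1..t} = {t<..n}" by auto
  have cA: "real (card {1..t}) = real t" by simp
  have "PCov n (\<lambda>\<sigma>. (1 - (real (card {1..t}) - 1) / (real n - 2)) * edge_count G {1..t} \<sigma>
           + (real (card {1..t}) - 1) / (real n - 2) * edge_count G ({1..n} - {1..t}) \<sigma>)
         (\<lambda>\<sigma>. edge_count G {1..t} \<sigma> - edge_count G ({1..n} - {1..t}) \<sigma>) = 0"
    by (rule main_cov[OF G _ True refl]) (use t in auto)
  then have cr: "PCov n (\<lambda>\<sigma>. (1 - (real t - 1) / (real n - 2)) * edge_count G {1..t} \<sigma>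
                        + (real t - 1) / (real n - 2) * edge_count G {t<..n} \<sigma>)
         (\<lambda>\<sigma>. edge_count G {1..t} \<sigma> - edge_count G {t<..n} \<sigma>) = 0"
    unfolding B cA .
  show ?thesis by (rule quad_generic[OF _ cr inv pw pd]) simp
next
  case False
  then have n2: "n = 2" "t = 1" using t by auto
  have "PVar n (\<lambda>\<sigma>. (1 - (real t - 1) / (real n - 2)) * edge_count G {1..t} \<sigma>
                        + (real t - 1) / (real n - 2) * edge_count G {t<..n} \<sigma>)
        = PCov n (\<lambda>\<sigma>. 0) (\<lambda>\<sigma>. 0)"
    unfolding PVar_def
    by (rule PCov_cong) (simp_all add: n2 edge_count_small[OF G])
  also have "\<dots> = 0" by (rule PCov_const_left)
  finally show ?thesis using pw by simp
qed

lemma interval_case: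
  assumes G: "simple_graph_on n G" and t: "1 \<le> t1" "t1 < t2" "t2 \<le> n"
    and inv: "invertible (cov_mat n (edge_count G ({1..n} - {t1<..t2})) (edge_count G {t1<..t2}))"
    and pw: "PVar n (\<lambda>\<sigma>. (real (t2 - t1) - 1) / (real n - 2) * edge_count G ({1..n} - {t1<..t2}) \<sigma>
                   + (real n - real (t2 - t1) - 1) / (real n - 2) * edge_count G {t1<..t2} \<sigma>) > 0"
    and pd: "PVar n (\<lambda>\<sigma>. edge_count G ({1..n} - {t1<..t2}) \<sigma> - edge_count G {t1<..t2} \<sigma>) > 0"
  shows "quad_stat n (edge_count G ({1..n} - {t1<..t2})) (edge_count G {t1<..t2}) =
     (std_stat n (\<lambda>\<sigma>. (real (t2 - t1) - 1) / (real n - 2) * edge_count G ({1..n} - {t1<..t2}) \<sigma>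
                   + (real n - real (t2 - t1) - 1) / (real n - 2) * edge_count G {t1<..t2} \<sigma>))\<^sup>2 +
     (std_stat n (\<lambda>\<sigma>. edge_count G ({1..n} - {t1<..t2}) \<sigma> - edge_count G {t1<..t2} \<sigma>))\<^sup>2"
proof (cases "n \<ge> 3")
  case True
  define A where "A = {1..n} - {t1<..t2}"
  have sub: "{t1<..t2} \<subseteq> {1..n}" using t by auto
  have B: "{1..n} - A = {t1<..t2}" unfolding A_def using sub by auto
  have cardA: "card A = n - (t2 - t1)" unfolding A_def using sub by (simp add: card_Diff_subset)
  have le: "t2 - t1 \<le> n" using t by simp
  have cA: "real (card A) - 1 = real n - real (t2 - t1) - 1" unfolding cardA using le by (simp add: of_nat_diff)
  have nz: "real n - 2 \<noteq> 0" using True by simp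
  have w1: "(real (t2 - t1) - 1) / (real n - 2) = 1 - (real n - real (t2 - t1) - 1) / (real n - 2)"
    using nz by (simp add: field_simps)
  have "PCov n (\<lambda>\<sigma>. (1 - (real (card A) - 1) / (real n - 2)) * edge_count G A \<sigma>
           + (real (card A) - 1) / (real n - 2) * edge_count G ({1..n} - A) \<sigma>)
         (\<lambda>\<sigma>. edge_count G A \<sigma> - edge_count G ({1..n} - A) \<sigma>) = 0"
    by (rule main_cov[OF G _ True refl]) (auto simp: A_def)
  then have cr: "PCov n (\<lambda>\<sigma>. (real (t2 - t1) - 1) / (real n - 2) * edge_count G ({1..n} - {t1<..t2}) \<sigma>
                   + (real n - real (t2 - t1) - 1) / (real n - 2) * edge_count G {t1<..t2} \<sigma>)
         (\<lambda>\<sigma>. edge_count G ({1..n} - {t1<..t2}) \<sigma> - edge_count G {t1<..t2} \<sigma>) = 0"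
    unfolding B cA w1 unfolding A_def .
  show ?thesis by (rule quad_generic[OF _ cr inv pw pd]) (simp add: w1)
next
  case False
  then have n2: "n = 2" "t1 = 1" "t2 = 2" using t by auto
  have "PVar n (\<lambda>\<sigma>. (real (t2 - t1) - 1) / (real n - 2) * edge_count G ({1..n} - {t1<..t2}) \<sigma>
                   + (real n - real (t2 - t1) - 1) / (real n - 2) * edge_count G {t1<..t2} \<sigma>)
        = PCov n (\<lambda>\<sigma>. 0) (\<lambda>\<sigma>. 0)"
    unfolding PVar_def by (rule PCov_cong) (simp_all add: n2)
  also have "\<dots> = 0" by (rule PCov_const_left)
  finally show ?thesis using pw by simp
qed

theorem lemma1:
  fixes n t t1 t2 :: nat and G :: "nat set set"
  assumes "simple_graph_on n G"
  shows
   "(let R1 = edge_count G {1..t}; R2 = edge_count G {t<..n};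
         p = (real t - 1) / (real n - 2); q = 1 - p;
         Rw = (\<lambda>\<sigma>. q * R1 \<sigma> + p * R2 \<sigma>);
         Rdiff = (\<lambda>\<sigma>. R1 \<sigma> - R2 \<sigma>)
     in 1 \<le> t \<and> t < n \<and> invertible (cov_mat n R1 R2) \<and>
        PVar n Rw > 0 \<and> PVar n Rdiff > 0 \<longrightarrow>
        quad_stat n R1 R2 = (std_stat n Rw)\<^sup>2 + (std_stat n Rdiff)\<^sup>2)
  \<and>
   (let m = t2 - t1;
         R1 = edge_count G ({1..n} - {t1<..t2}); R2 = edge_count G {t1<..t2};
         Rw = (\<lambda>\<sigma>. (real m - 1) / (real n - 2) * R1 \<sigma>
                   + (real n - real m - 1) / (real n - 2) * R2 \<sigma>);
         Rdiff = (\<lambda>\<sigma>. R1 \<sigma> - R2 \<sigma>)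
     in 1 \<le> t1 \<and> t1 < t2 \<and> t2 \<le> n \<and> invertible (cov_mat n R1 R2) \<and>
        PVar n Rw > 0 \<and> PVar n Rdiff > 0 \<longrightarrow>
        quad_stat n R1 R2 = (std_stat n Rw)\<^sup>2 + (std_stat n Rdiff)\<^sup>2)"
  unfolding Let_def using single_case[OF assms] interval_case[OF assms] by blast

end
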